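(* Let $1\to F\to G\xrightarrow{\tau} Q\to 1$ be a short exact sequence of groups with $F$ finite. Let $T$ be a finite generating set of $Q$ and put $S=\tau^{-1}(T)\cup F$ (a finite generating set of $G$). Then \[\mathrm{ConjGeo}(G,S)=\tau^{-1}\bigl(\mathrm{ConjGeo}(Q,T)\bigr)\cup(F\setminus\{1\}),\] where $\tau$ is extended letterwise to a map $\tau^{-1}(T)^*\to T^*$ and $F\setminus\{1\}$ denotes the set of one-letter words. Consequently, for any class of languages $\mathbf C$ closed under inverse images by non-erasing monoid homomorphisms and under union with finite languages (e.g. regular, one-counter, context-free, recursive languages), $\mathrm{ConjGeo}(G,S)\in\mathbf C$ if and only if $\mathrm{ConjGeo}(Q,T)\in\mathbf C$.
   Context: For a group $G$ with finite generating set $S$, a word $w\in S^*$ is a conjugacy geodesic if its length equals $\min\{\|h\|_S : h \text{ conjugate in } G \text{ to the element } \bar w \text{ represented by } w\}$, where $\|h\|_S$ is the word length with respect to $S$. $\mathrm{ConjGeo}(G,S)\subseteq S^*$ is the language of all conjugacy geodesics. *)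

theory Defs
  imports "HOL-Algebra.Algebra"
begin

definition word_eval :: "('a, 'm) monoid_scheme \<Rightarrow> 'a list \<Rightarrow> 'a" where
  "word_eval G w = foldr (\<lambda>a b. a \<otimes>\<^bsub>G\<^esub> b) w \<one>\<^bsub>G\<^esub>"

definition generating_set :: "('a, 'm) monoid_scheme \<Rightarrow> 'a set \<Rightarrow> bool" where
  "generating_set G S \<longleftrightarrow> S \<subseteq> carrier G \<and> (\<forall>g\<in>carrier G. \<exists>w\<in>lists S. word_eval G w = g)"

definition word_length :: "('a, 'm) monoid_scheme \<Rightarrow> 'a set \<Rightarrow> 'a \<Rightarrow> nat" where
  "word_length G S g = (LEAST n. \<exists>w\<in>lists S. length w = n \<and> word_eval G w = g)"

definition conjugate_in :: "('a, 'm) monoid_scheme \<Rightarrow> 'a \<Rightarrow> 'a \<Rightarrow> bool" where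
  "conjugate_in G h g \<longleftrightarrow> h \<in> carrier G \<and> (\<exists>x\<in>carrier G. h = x \<otimes>\<^bsub>G\<^esub> g \<otimes>\<^bsub>G\<^esub> inv\<^bsub>G\<^esub> x)"

definition conj_length :: "('a, 'm) monoid_scheme \<Rightarrow> 'a set \<Rightarrow> 'a \<Rightarrow> nat" where
  "conj_length G S g = (LEAST n. \<exists>h. conjugate_in G h g \<and> word_length G S h = n)"

definition ConjGeo :: "('a, 'm) monoid_scheme \<Rightarrow> 'a set \<Rightarrow> 'a list set" where
  "ConjGeo G S = {w \<in> lists S. length w = conj_length G S (word_eval G w)}"

definition hom_preimage :: "'a set \<Rightarrow> ('a \<Rightarrow> 'b list) \<Rightarrow> 'b list set \<Rightarrow> 'a list set" where
  "hom_preimage A phi L = {w \<in> lists A. concat (map phi w) \<in> L}"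

definition nonerasing_hom :: "'a set \<Rightarrow> 'b set \<Rightarrow> ('a \<Rightarrow> 'b list) \<Rightarrow> bool" where
  "nonerasing_hom A B phi \<longleftrightarrow> (\<forall>a\<in>A. phi a \<in> lists B \<and> phi a \<noteq> [])"

text \<open>A class of languages, given by its members over alphabets in 'a (CA) and in 'b (CB),
  closed under inverse images by non-erasing homomorphisms between finite alphabets
  (in both directions and within each type) and under union with finite languages.\<close>
definition closed_language_classes :: "'a list set set \<Rightarrow> 'b list set set \<Rightarrow> bool" where
  "closed_language_classes CA CB \<longleftrightarrow>
     (\<forall>A B phi L. finite A \<and> finite B \<and> nonerasing_hom A B phi \<and> L \<in> CB \<longrightarrow> hom_preimage A phi L \<in> CA) \<and>
     (\<forall>A B phi L. finite A \<and> finite B \<and> nonerasing_hom A B phi \<and> L \<in> CA \<longrightarrow> hom_preimage A phi L \<in> CB) \<and>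
     (\<forall>A B phi L. finite A \<and> finite B \<and> nonerasing_hom A B phi \<and> L \<in> CA \<longrightarrow> hom_preimage A phi L \<in> CA) \<and>
     (\<forall>A B phi L. finite A \<and> finite B \<and> nonerasing_hom A B phi \<and> L \<in> CB \<longrightarrow> hom_preimage A phi L \<in> CB) \<and>
     (\<forall>L K. L \<in> CA \<and> finite K \<longrightarrow> L \<union> K \<in> CA) \<and>
     (\<forall>L K. L \<in> CB \<and> finite K \<longrightarrow> L \<union> K \<in> CB)"

end

theory Submission
  imports Defs
begin


lemma we_nil[simp]: "word_eval G [] = \<one>\<^bsub>G\<^esub>" by (simp add: word_eval_def)
lemma we_cons[simp]: "word_eval G (a # w) = a \<otimes>\<^bsub>G\<^esub> word_eval G w" by (simp add: word_eval_def)

lemma (in monoid) we_closed: "w \<in> lists (carrier G) \<Longrightarrow> word_eval G w \<in> carrier G"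
  by (induction w) auto

lemma (in monoid) we_single: "a \<in> carrier G \<Longrightarrow> word_eval G [a] = a" by simp

lemma (in monoid) wl_le:
  assumes "w \<in> lists SS" "word_eval G w = g"
  shows "word_length G SS g \<le> length w"
  unfolding word_length_def using assms by (intro Least_le) auto

lemma (in monoid) wl_ex:
  assumes "w \<in> lists SS" "word_eval G w = g"
  shows "\<exists>u\<in>lists SS. length u = word_length G SS g \<and> word_eval G u = g"
proof -
  have "\<exists>n. \<exists>u\<in>lists SS. length u = n \<and> word_eval G u = g" using assms by blast
  then show ?thesis unfolding word_length_def by (rule LeastI_ex)
qed

lemma (in monoid) cl_le:
  assumes "conjugate_in G h g"
  shows "conj_length G SS g \<le> word_length G SS h"
  unfolding conj_length_def using assms by (intro Least_le) auto

lemma (in group) conj_refl: "g \<in> carrier G \<Longrightarrow> conjugate_in G g g"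
  unfolding conjugate_in_def by (intro conjI bexI[of _ \<one>]) auto

lemma (in monoid) cl_ex:
  assumes "conjugate_in G g g"
  shows "\<exists>h. conjugate_in G h g \<and> word_length G SS h = conj_length G SS g"
proof -
  have "\<exists>n. \<exists>h. conjugate_in G h g \<and> word_length G SS h = n" using assms by blast
  then show ?thesis unfolding conj_length_def by (rule LeastI_ex)
qed

lemma (in group) cl_one: "conj_length G SS \<one> = 0"
proof -
  have "word_length G SS \<one> = 0" using wl_le[of "[]" SS \<one>] by simp
  then show ?thesis using cl_le[OF conj_refl[of \<one>], of SS] by simp
qed

lemma (in group) conj_ne_one:
  assumes "conjugate_in G h g" "g \<in> carrier G" "g \<noteq> \<one>" shows "h \<noteq> \<one>"
proof
  assume "h = \<one>"
  with assms obtain x where x: "x \<in> carrier G" "\<one> = x \<otimes> g \<otimes> inv x" unfolding conjugate_in_def by auto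
  then have "x \<otimes> g \<otimes> inv x = x \<otimes> \<one> \<otimes> inv x" using x by (metis r_one r_inv)
  then have "g = \<one>" using x assms by (metis inv_closed m_closed one_closed r_cancel l_cancel)
  then show False using assms by simp
qed



locale cg = group_hom G Q \<tau>
  for G :: "('g, 'm) monoid_scheme" and Q :: "('q, 'n) monoid_scheme" and \<tau> :: "'g \<Rightarrow> 'q" +
  fixes T :: "'q set"
  assumes surj: "\<tau> ` carrier G = carrier Q"
    and finK: "finite (kernel G Q \<tau>)"
    and finT: "finite T" and gen: "generating_set Q T"
begin

definition "AA = \<tau> -` T \<inter> carrier G"
definition "FF = kernel G Q \<tau>"
definition "SS = AA \<union> FF"

lemma FF_iff: "x \<in> FF \<longleftrightarrow> x \<in> carrier G \<and> \<tau> x = \<one>\<^bsub>Q\<^esub>"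
  by (simp add: FF_def kernel_def)

lemma T_sub: "T \<subseteq> carrier Q" using gen by (simp add: generating_set_def)

lemma SS_sub: "SS \<subseteq> carrier G" by (auto simp: SS_def AA_def FF_iff)

lemma tau_we: "w \<in> lists (carrier G) \<Longrightarrow> \<tau> (word_eval G w) = word_eval Q (map \<tau> w)"
  by (induction w) (auto simp: G.we_closed)

lemma genQ: "q \<in> carrier Q \<Longrightarrow> \<exists>u\<in>lists T. word_eval Q u = q"
  using gen by (simp add: generating_set_def)

lemma project:
  "w \<in> lists SS \<Longrightarrow> \<exists>u\<in>lists T. word_eval Q u = \<tau> (word_eval G w) \<and> length u \<le> length w
      \<and> (w \<notin> lists AA \<longrightarrow> length u < length w)"
proof (induction w)
  case Nil then show ?case by (intro bexI[of _ "[]"]) auto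
next
  case (Cons a w)
  then obtain u where u: "u \<in> lists T" "word_eval Q u = \<tau> (word_eval G w)" "length u \<le> length w"
     "w \<notin> lists AA \<longrightarrow> length u < length w" by auto
  have aG: "a \<in> carrier G" and wG: "w \<in> lists (carrier G)" using Cons.prems SS_sub by auto
  have ev: "word_eval G w \<in> carrier G" using G.we_closed[OF wG] .
  show ?case
  proof (cases "a \<in> AA")
    case True
    then have "\<tau> a \<in> T" by (simp add: AA_def)
    then show ?thesis using u aG ev True by (intro bexI[of _ "\<tau> a # u"]) auto
  next
    case False
    then have "a \<in> FF" using Cons.prems by (auto simp: SS_def)
    then have "\<tau> a = \<one>\<^bsub>Q\<^esub>" by (simp add: FF_iff)
    then show ?thesis using u aG ev False by (intro bexI[of _ "u"]) auto
  qed
qed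

lemma lift:
  "u \<in> lists T \<Longrightarrow> u \<noteq> [] \<Longrightarrow> g \<in> carrier G \<Longrightarrow> word_eval Q u = \<tau> g \<Longrightarrow>
     \<exists>w\<in>lists AA. length w = length u \<and> word_eval G w = g"
proof (induction u arbitrary: g)
  case Nil then show ?case by simp
next
  case (Cons t u)
  show ?case
  proof (cases "u = []")
    case True
    then have "\<tau> g = t" using Cons.prems T_sub by auto
    then show ?thesis using Cons.prems True by (intro bexI[of _ "[g]"]) (auto simp: AA_def)
  next
    case False
    have tQ: "t \<in> carrier Q" using Cons.prems T_sub by auto
    then obtain a where a: "a \<in> carrier G" "\<tau> a = t" using surj by (metis imageE)
    have uQ: "u \<in> lists (carrier Q)" using Cons.prems T_sub by auto
    define g' where "g' = inv\<^bsub>G\<^esub> a \<otimes>\<^bsub>G\<^esub> g"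
    have g'G: "g' \<in> carrier G" using a Cons.prems by (simp add: g'_def)
    have xQ: "word_eval Q u \<in> carrier Q" using H.we_closed[OF uQ] .
    have e: "t \<otimes>\<^bsub>Q\<^esub> word_eval Q u = \<tau> g" using Cons.prems(4) by simp
    have "\<tau> g' = inv\<^bsub>Q\<^esub> t \<otimes>\<^bsub>Q\<^esub> \<tau> g" using a Cons.prems by (simp add: g'_def)
    also have "\<dots> = inv\<^bsub>Q\<^esub> t \<otimes>\<^bsub>Q\<^esub> (t \<otimes>\<^bsub>Q\<^esub> word_eval Q u)" by (simp only: e)
    also have "\<dots> = word_eval Q u" using tQ xQ by (simp add: H.m_assoc[symmetric])
    finally obtain w where w: "w \<in> lists AA" "length w = length u" "word_eval G w = g'"
      using Cons.IH[OF _ False g'G] Cons.prems by force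
    have "a \<otimes>\<^bsub>G\<^esub> g' = g" using a Cons.prems by (simp add: g'_def G.m_assoc[symmetric])
    then show ?thesis using w a Cons.prems by (intro bexI[of _ "a # w"]) (auto simp: AA_def)
  qed
qed

end


context cg
begin

lemma AAA_sub_SS: "AA \<subseteq> SS" by (simp add: SS_def)
lemma AA_sub: "AA \<subseteq> carrier G" by (simp add: AA_def)

lemma genG: "g \<in> carrier G \<Longrightarrow> \<exists>w\<in>lists SS. word_eval G w = g"
proof (cases "\<tau> g = \<one>\<^bsub>Q\<^esub>")
  case True
  assume "g \<in> carrier G"
  with True have "g \<in> SS" by (simp add: SS_def FF_iff)
  then show ?thesis using \<open>g \<in> carrier G\<close> by (intro bexI[of _ "[g]"]) auto
next
  case False
  assume gG: "g \<in> carrier G"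
  obtain u where u: "u \<in> lists T" "word_eval Q u = \<tau> g" using genQ[of "\<tau> g"] gG by auto
  have "u \<noteq> []" using u False by auto
  from lift[OF u(1) this gG u(2)] obtain w where "w \<in> lists AA" "word_eval G w = g" by auto
  then show ?thesis using AAA_sub_SS by (intro bexI[of _ w]) auto
qed

lemma wl_eq:
  assumes gG: "g \<in> carrier G" and ne: "\<tau> g \<noteq> \<one>\<^bsub>Q\<^esub>"
  shows "word_length G SS g = word_length Q T (\<tau> g)"
proof (rule antisym)
  obtain u where u: "u \<in> lists T" "word_eval Q u = \<tau> g" using genQ[of "\<tau> g"] gG by auto
  obtain u0 where u0: "u0 \<in> lists T" "length u0 = word_length Q T (\<tau> g)" "word_eval Q u0 = \<tau> g"
    using H.wl_ex[OF u] by auto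
  have "u0 \<noteq> []" using u0 ne by auto
  from lift[OF u0(1) this gG u0(3)] obtain w where w: "w \<in> lists AA" "length w = length u0" "word_eval G w = g"
    by auto
  have "w \<in> lists SS" using w(1) AAA_sub_SS by auto
  from G.wl_le[OF this w(3)] show "word_length G SS g \<le> word_length Q T (\<tau> g)" using w u0 by simp
next
  obtain w where w: "w \<in> lists SS" "word_eval G w = g" using genG[OF gG] by auto
  obtain w1 where w1: "w1 \<in> lists SS" "length w1 = word_length G SS g" "word_eval G w1 = g"
    using G.wl_ex[OF w] by auto
  from project[OF w1(1)] obtain u where u: "u \<in> lists T" "word_eval Q u = \<tau> g" "length u \<le> length w1"
    using w1 by auto
  from H.wl_le[OF u(1) u(2)] show "word_length Q T (\<tau> g) \<le> word_length G SS g" using u w1 by simp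
qed

lemma conjG: "conjugate_in G h g \<Longrightarrow> g \<in> carrier G \<Longrightarrow> conjugate_in Q (\<tau> h) (\<tau> g)"
  unfolding conjugate_in_def
  by (auto intro!: bexI[of _ "\<tau> _"])

lemma conjQ:
  assumes "conjugate_in Q h' (\<tau> g)" "g \<in> carrier G"
  shows "\<exists>h. conjugate_in G h g \<and> \<tau> h = h'"
proof -
  obtain y where y: "y \<in> carrier Q" "h' = y \<otimes>\<^bsub>Q\<^esub> \<tau> g \<otimes>\<^bsub>Q\<^esub> inv\<^bsub>Q\<^esub> y"
    using assms(1) unfolding conjugate_in_def by auto
  obtain x where x: "x \<in> carrier G" "\<tau> x = y" using y(1) surj by (metis imageE)
  show ?thesis
    using x y assms(2) unfolding conjugate_in_def
    by (intro exI[of _ "x \<otimes>\<^bsub>G\<^esub> g \<otimes>\<^bsub>G\<^esub> inv\<^bsub>G\<^esub> x"]) auto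
qed

lemma cl_eq:
  assumes gG: "g \<in> carrier G" and ne: "\<tau> g \<noteq> \<one>\<^bsub>Q\<^esub>"
  shows "conj_length G SS g = conj_length Q T (\<tau> g)"
proof (rule antisym)
  have tg: "\<tau> g \<in> carrier Q" using gG by simp
  obtain h' where h': "conjugate_in Q h' (\<tau> g)" "word_length Q T h' = conj_length Q T (\<tau> g)"
    using H.cl_ex[OF H.conj_refl[OF tg]] by auto
  obtain h where h: "conjugate_in G h g" "\<tau> h = h'" using conjQ[OF h'(1) gG] by auto
  have hG: "h \<in> carrier G" using h(1) by (simp add: conjugate_in_def)
  have "h' \<noteq> \<one>\<^bsub>Q\<^esub>" using H.conj_ne_one[OF h'(1) tg ne] .
  then have "word_length G SS h = word_length Q T h'" using wl_eq[OF hG] h(2) by simp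
  then show "conj_length G SS g \<le> conj_length Q T (\<tau> g)" using G.cl_le[OF h(1), of SS] h' by simp
next
  have tg: "\<tau> g \<in> carrier Q" using gG by simp
  obtain h where h: "conjugate_in G h g" "word_length G SS h = conj_length G SS g"
    using G.cl_ex[OF G.conj_refl[OF gG]] by auto
  have hG: "h \<in> carrier G" using h(1) by (simp add: conjugate_in_def)
  have c: "conjugate_in Q (\<tau> h) (\<tau> g)" using conjG[OF h(1) gG] .
  have "\<tau> h \<noteq> \<one>\<^bsub>Q\<^esub>" using H.conj_ne_one[OF c tg ne] .
  then have "word_length G SS h = word_length Q T (\<tau> h)" using wl_eq[OF hG] by simp
  then show "conj_length Q T (\<tau> g) \<le> conj_length G SS g" using H.cl_le[OF c, of T] h by simp
qed

lemma cl_F: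
  assumes gF: "g \<in> FF" and ne: "g \<noteq> \<one>\<^bsub>G\<^esub>"
  shows "conj_length G SS g = 1"
proof (rule antisym)
  have gG: "g \<in> carrier G" using gF by (simp add: FF_iff)
  have "[g] \<in> lists SS" using gF by (simp add: SS_def)
  from G.wl_le[OF this, of g] have "word_length G SS g \<le> 1" using gG by simp
  then show "conj_length G SS g \<le> 1" using G.cl_le[OF G.conj_refl[OF gG], of SS] by simp
next
  have gG: "g \<in> carrier G" using gF by (simp add: FF_iff)
  obtain h where h: "conjugate_in G h g" "word_length G SS h = conj_length G SS g"
    using G.cl_ex[OF G.conj_refl[OF gG]] by auto
  have hG: "h \<in> carrier G" using h(1) by (simp add: conjugate_in_def)
  have hne: "h \<noteq> \<one>\<^bsub>G\<^esub>" using G.conj_ne_one[OF h(1) gG ne] .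
  obtain w where w: "w \<in> lists SS" "word_eval G w = h" using genG[OF hG] by auto
  obtain w1 where w1: "w1 \<in> lists SS" "length w1 = word_length G SS h" "word_eval G w1 = h"
    using G.wl_ex[OF w] by auto
  have "w1 \<noteq> []" using w1 hne by auto
  then show "1 \<le> conj_length G SS g" using w1 h by (cases w1) auto
qed

end


context cg
begin

lemma main_eq:
  "ConjGeo G SS = {w \<in> lists AA. map \<tau> w \<in> ConjGeo Q T} \<union> (\<lambda>f. [f]) ` (FF - {\<one>\<^bsub>G\<^esub>})"
proof (intro equalityI subsetI)
  fix w assume "w \<in> ConjGeo G SS"
  then have wS: "w \<in> lists SS" and len: "length w = conj_length G SS (word_eval G w)"
    by (auto simp: ConjGeo_def)
  define g where "g = word_eval G w"
  have wG: "w \<in> lists (carrier G)" using wS SS_sub by auto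
  have gG: "g \<in> carrier G" using G.we_closed[OF wG] by (simp add: g_def)
  show "w \<in> {w \<in> lists AA. map \<tau> w \<in> ConjGeo Q T} \<union> (\<lambda>f. [f]) ` (FF - {\<one>\<^bsub>G\<^esub>})"
  proof (cases "\<tau> g = \<one>\<^bsub>Q\<^esub>")
    case False
    have ce: "conj_length G SS g = conj_length Q T (\<tau> g)" using cl_eq[OF gG False] .
    from project[OF wS] obtain u where u: "u \<in> lists T" "word_eval Q u = \<tau> g" "length u \<le> length w"
      "w \<notin> lists AA \<longrightarrow> length u < length w" by (auto simp: g_def)
    have tg: "\<tau> g \<in> carrier Q" using gG by simp
    have "conj_length Q T (\<tau> g) \<le> length u"
      using H.cl_le[OF H.conj_refl[OF tg], of T] H.wl_le[OF u(1) u(2)] by simp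
    then have wA: "w \<in> lists AA" using u(4) len ce by (auto simp: g_def)
    have mT: "map \<tau> w \<in> lists T" using wA by (auto simp: AA_def)
    have "word_eval Q (map \<tau> w) = \<tau> g" using tau_we[OF wG] by (simp add: g_def)
    then have "map \<tau> w \<in> ConjGeo Q T" using mT len ce by (simp add: ConjGeo_def g_def)
    then show ?thesis using wA by simp
  next
    case True
    then have gF: "g \<in> FF" using gG by (simp add: FF_iff)
    show ?thesis
    proof (cases "g = \<one>\<^bsub>G\<^esub>")
      case True
      then have "w = []" using len G.cl_one[of SS] by (simp add: g_def)
      moreover have "[] \<in> ConjGeo Q T" using H.cl_one[of T] by (simp add: ConjGeo_def)
      ultimately show ?thesis by simp
    next
      case False
      have "length w = 1" using len cl_F[OF gF False] by (simp add: g_def)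
      then obtain a where "w = [a]" by (cases w) auto
      moreover have "a \<in> carrier G" using wG \<open>w = [a]\<close> by simp
      ultimately have "w = [g]" by (simp add: g_def)
      then show ?thesis using gF False by auto
    qed
  qed
next
  fix w assume w: "w \<in> {w \<in> lists AA. map \<tau> w \<in> ConjGeo Q T} \<union> (\<lambda>f. [f]) ` (FF - {\<one>\<^bsub>G\<^esub>})"
  show "w \<in> ConjGeo G SS"
  using w
  proof (elim UnE)
    assume "w \<in> {w \<in> lists AA. map \<tau> w \<in> ConjGeo Q T}"
    then have True: "w \<in> lists AA" and m: "map \<tau> w \<in> ConjGeo Q T" by auto
    have wS: "w \<in> lists SS" using True AAA_sub_SS by auto
    have wG: "w \<in> lists (carrier G)" using True AA_sub by auto
    define g where "g = word_eval G w"
    have gG: "g \<in> carrier G" using G.we_closed[OF wG] by (simp add: g_def)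
    have ev: "word_eval Q (map \<tau> w) = \<tau> g" using tau_we[OF wG] by (simp add: g_def)
    have len: "length w = conj_length Q T (\<tau> g)" using m ev by (simp add: ConjGeo_def)
    show ?thesis
    proof (cases "\<tau> g = \<one>\<^bsub>Q\<^esub>")
      case False
      then show ?thesis using cl_eq[OF gG False] len wS by (simp add: ConjGeo_def g_def)
    next
      case True
      then have "w = []" using len H.cl_one[of T] by simp
      then show ?thesis using G.cl_one[of SS] by (simp add: ConjGeo_def)
    qed
  next
    assume "w \<in> (\<lambda>f. [f]) ` (FF - {\<one>\<^bsub>G\<^esub>})"
    then obtain f where f: "f \<in> FF" "f \<noteq> \<one>\<^bsub>G\<^esub>" "w = [f]" by auto
    have fG: "f \<in> carrier G" using f by (simp add: FF_iff)
    have "f \<in> SS" using f by (simp add: SS_def)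
    then show ?thesis using f fG cl_F[OF f(1) f(2)] by (simp add: ConjGeo_def)
  qed
qed

lemma finF: "finite FF" using finK by (simp add: FF_def)

lemma fiber_finite: "finite {x \<in> carrier G. \<tau> x = t}"
proof (cases "\<exists>a\<in>carrier G. \<tau> a = t")
  case False
  then have "{x \<in> carrier G. \<tau> x = t} = {}" by auto
  then show ?thesis by (metis finite.emptyI)
next
  case True
  then obtain a where a: "a \<in> carrier G" "\<tau> a = t" by auto
  have "{x \<in> carrier G. \<tau> x = t} \<subseteq> (\<lambda>k. a \<otimes>\<^bsub>G\<^esub> k) ` FF"
  proof
    fix x assume x: "x \<in> {x \<in> carrier G. \<tau> x = t}"
    then have xG: "x \<in> carrier G" by simp
    have "\<tau> (inv\<^bsub>G\<^esub> a \<otimes>\<^bsub>G\<^esub> x) = \<one>\<^bsub>Q\<^esub>"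
      using a x hom_closed[OF a(1)] by simp
    then have k: "inv\<^bsub>G\<^esub> a \<otimes>\<^bsub>G\<^esub> x \<in> FF" using a xG by (simp add: FF_iff)
    have "x = a \<otimes>\<^bsub>G\<^esub> (inv\<^bsub>G\<^esub> a \<otimes>\<^bsub>G\<^esub> x)" using a xG by (simp add: G.m_assoc[symmetric])
    then show "x \<in> (\<lambda>k. a \<otimes>\<^bsub>G\<^esub> k) ` FF" using k by blast
  qed
  then show ?thesis by (rule finite_subset) (simp add: finF)
qed

lemma finA: "finite AA"
proof -
  have "AA = (\<Union>t\<in>T. {x \<in> carrier G. \<tau> x = t})" by (auto simp: AA_def)
  then show ?thesis using finT fiber_finite by simp
qed

lemma finS: "finite SS" using finA finF by (simp add: SS_def)

definition "sec t = (if t = \<one>\<^bsub>Q\<^esub> then \<one>\<^bsub>G\<^esub> else (SOME a. a \<in> carrier G \<and> \<tau> a = t))"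

lemma sec: "t \<in> T \<Longrightarrow> sec t \<in> AA \<and> \<tau> (sec t) = t"
proof -
  assume tT: "t \<in> T"
  then have tQ: "t \<in> carrier Q" using T_sub by auto
  show ?thesis
  proof (cases "t = \<one>\<^bsub>Q\<^esub>")
    case True then show ?thesis using tT by (simp add: sec_def AA_def)
  next
    case False
    have "\<exists>a. a \<in> carrier G \<and> \<tau> a = t" using tQ surj by (metis imageE)
    from someI_ex[OF this] have "sec t \<in> carrier G \<and> \<tau> (sec t) = t" using False by (simp add: sec_def)
    then show ?thesis using tT by (simp add: AA_def)
  qed
qed

lemma pre1: "hom_preimage AA (\<lambda>a. [\<tau> a]) (ConjGeo Q T) = {w \<in> lists AA. map \<tau> w \<in> ConjGeo Q T}"
proof -
  have "concat (map (\<lambda>a. [\<tau> a]) w) = map \<tau> w" for w by (induction w) auto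
  then show ?thesis by (simp add: hom_preimage_def)
qed

lemma ConjGeo_lists: "ConjGeo Q T \<subseteq> lists T" by (auto simp: ConjGeo_def)

lemma secA: "t \<in> T \<Longrightarrow> sec t \<in> AA" using sec by blast
lemma sec_tau: "t \<in> T \<Longrightarrow> \<tau> (sec t) = t" using sec by blast

lemma pre2: "hom_preimage T (\<lambda>t. [sec t]) (ConjGeo G SS) = ConjGeo Q T"
proof -
  have c: "concat (map (\<lambda>t. [sec t]) u) = map sec u" for u by (induction u) auto
  have key: "(map sec u \<in> ConjGeo G SS) = (u \<in> ConjGeo Q T)" if uT: "u \<in> lists T" for u
  proof -
    have mA: "map sec u \<in> lists AA" using uT by (induction u) (simp_all add: secA)
    have mm: "map \<tau> (map sec u) = u" using uT by (induction u) (simp_all add: sec_tau)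
    have notF: "map sec u \<notin> (\<lambda>f. [f]) ` (FF - {\<one>\<^bsub>G\<^esub>})"
    proof
      assume "map sec u \<in> (\<lambda>f. [f]) ` (FF - {\<one>\<^bsub>G\<^esub>})"
      then obtain f where f3: "map sec u = [f]" and fF: "f \<in> FF - {\<one>\<^bsub>G\<^esub>}" by (rule imageE)
      have f: "f \<in> FF" "f \<noteq> \<one>\<^bsub>G\<^esub>" "map sec u = [f]" using fF f3 by auto
      have "length (map sec u) = 1" using f3 by simp
      then have "length u = 1" by simp
      then have "u = [hd u]" by (cases u) auto
      then obtain t where t1: "u = [t]" by blast
      have tT: "t \<in> T" using uT t1 by simp
      have st: "sec t = f" using f(3) t1 by simp
      have "\<tau> f = t" using sec_tau[OF tT] st by simp
      then have "t = \<one>\<^bsub>Q\<^esub>" using f(1) by (simp add: FF_iff)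
      then have "f = \<one>\<^bsub>G\<^esub>" using st by (simp add: sec_def)
      then show False using f(2) by contradiction
    qed
    have "map sec u \<in> ConjGeo G SS \<longleftrightarrow> map sec u \<in> {w \<in> lists AA. map \<tau> w \<in> ConjGeo Q T}"
      unfolding main_eq using notF by blast
    also have "\<dots> \<longleftrightarrow> u \<in> ConjGeo Q T" using mA mm by simp
    finally show ?thesis .
  qed
  show ?thesis unfolding hom_preimage_def c
  proof (intro equalityI subsetI)
    fix u assume "u \<in> {u \<in> lists T. map sec u \<in> ConjGeo G SS}"
    then show "u \<in> ConjGeo Q T" using key by blast
  next
    fix u assume u: "u \<in> ConjGeo Q T"
    then have "u \<in> lists T" using ConjGeo_lists by blast
    then show "u \<in> {u \<in> lists T. map sec u \<in> ConjGeo G SS}" using key u by blast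
  qed
qed

lemma classes:
  assumes cl: "closed_language_classes CG CQ"
  shows "ConjGeo G SS \<in> CG \<longleftrightarrow> ConjGeo Q T \<in> CQ"
proof -
  have c1: "\<forall>AA B phi L. finite AA \<and> finite B \<and> nonerasing_hom AA B phi \<and> L \<in> CQ \<longrightarrow> hom_preimage AA phi L \<in> CG"
    using cl unfolding closed_language_classes_def by (rule conjunct1)
  have c2: "\<forall>AA B phi L. finite AA \<and> finite B \<and> nonerasing_hom AA B phi \<and> L \<in> CG \<longrightarrow> hom_preimage AA phi L \<in> CQ"
    using cl unfolding closed_language_classes_def by (elim conjE)
  have c5: "\<forall>L K. L \<in> CG \<and> finite K \<longrightarrow> L \<union> K \<in> CG"
    using cl unfolding closed_language_classes_def by (elim conjE)
  show ?thesis
  proof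
    assume h: "ConjGeo G SS \<in> CG"
    have "nonerasing_hom T SS (\<lambda>t. [sec t])" using secA AAA_sub_SS by (auto simp: nonerasing_hom_def)
    then have "hom_preimage T (\<lambda>t. [sec t]) (ConjGeo G SS) \<in> CQ"
      using c2 finT finS h by blast
    then show "ConjGeo Q T \<in> CQ" using pre2 by simp
  next
    assume h: "ConjGeo Q T \<in> CQ"
    have "nonerasing_hom AA T (\<lambda>a. [\<tau> a])" by (auto simp: nonerasing_hom_def AA_def)
    then have "hom_preimage AA (\<lambda>a. [\<tau> a]) (ConjGeo Q T) \<in> CG"
      using c1 finT finA h by blast
    then have "{w \<in> lists AA. map \<tau> w \<in> ConjGeo Q T} \<in> CG" using pre1 by simp
    moreover have "finite ((\<lambda>f. [f]) ` (FF - {\<one>\<^bsub>G\<^esub>}))" using finF by simp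
    ultimately have "{w \<in> lists AA. map \<tau> w \<in> ConjGeo Q T} \<union> (\<lambda>f. [f]) ` (FF - {\<one>\<^bsub>G\<^esub>}) \<in> CG"
      using c5 by blast
    then show "ConjGeo G SS \<in> CG" using main_eq by simp
  qed
qed

end

theorem mainTheorem5:
  fixes G :: "('g, 'm) monoid_scheme" and Q :: "('q, 'n) monoid_scheme"
    and \<tau> :: "'g \<Rightarrow> 'q" and T :: "'q set"
  assumes "group G" and "group Q"
    and "\<tau> \<in> hom G Q" and "\<tau> ` carrier G = carrier Q"
    and "finite (kernel G Q \<tau>)"
    and "finite T" and "generating_set Q T"
  defines "S \<equiv> (\<tau> -` T \<inter> carrier G) \<union> kernel G Q \<tau>"
  shows "ConjGeo G S =
           {w \<in> lists (\<tau> -` T \<inter> carrier G). map \<tau> w \<in> ConjGeo Q T}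
           \<union> (\<lambda>f. [f]) ` (kernel G Q \<tau> - {\<one>\<^bsub>G\<^esub>})
         \<and> (\<forall>CG CQ. closed_language_classes CG CQ \<longrightarrow>
              (ConjGeo G S \<in> CG \<longleftrightarrow> ConjGeo Q T \<in> CQ))"
proof -
  have "cg G Q \<tau> T"
    unfolding cg_def cg_axioms_def group_hom_def group_hom_axioms_def using assms(1-7) by auto
  then interpret cg G Q \<tau> T .
  have SS: "S = SS" unfolding S_def SS_def AA_def FF_def ..
  show ?thesis unfolding SS using main_eq classes unfolding FF_def AA_def by blast
qed

end
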